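(* Let $q$ be a prime power. Then the subgroup of $\overline{\mathbb{Q}}^*$ generated by all $q$-Weil numbers of weight one has infinite rank.
   Context: A $q$-Weil number of weight one is an algebraic integer $\alpha\in\overline{\mathbb{Q}}$ such that $|\iota(\alpha)|=q^{1/2}$ for every embedding $\iota:\overline{\mathbb{Q}}\hookrightarrow\mathbb{C}$. *)

theory Defs
  imports "HOL-Computational_Algebra.Polynomial" Complex_Main
begin

text \<open>We realise the algebraic closure of Q as the set of algebraic complex numbers.\<close>

definition Qbar :: "complex set" where
  "Qbar = {x. algebraic x}"

definition algebraic_integer :: "complex \<Rightarrow> bool" where
  "algebraic_integer x \<longleftrightarrow>
     (\<exists>p :: complex poly. (\<forall>i. coeff p i \<in> \<int>) \<and> lead_coeff p = 1 \<and> poly p x = 0)"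

text \<open>Field embeddings of Qbar into C (only the values on Qbar matter).\<close>
definition qbar_embedding :: "(complex \<Rightarrow> complex) \<Rightarrow> bool" where
  "qbar_embedding \<sigma> \<longleftrightarrow>
     (\<forall>x\<in>Qbar. \<forall>y\<in>Qbar. \<sigma> (x + y) = \<sigma> x + \<sigma> y \<and> \<sigma> (x * y) = \<sigma> x * \<sigma> y)
     \<and> \<sigma> 1 = 1 \<and> inj_on \<sigma> Qbar"

definition weil_number :: "nat \<Rightarrow> complex \<Rightarrow> bool" where
  "weil_number q \<alpha> \<longleftrightarrow> \<alpha> \<in> Qbar \<and> algebraic_integer \<alpha> \<and>
     (\<forall>\<sigma>. qbar_embedding \<sigma> \<longrightarrow> cmod (\<sigma> \<alpha>) = sqrt (real q))"

inductive_set mult_subgroup_gen :: "complex set \<Rightarrow> complex set" for S where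
  one: "1 \<in> mult_subgroup_gen S"
| gen: "x \<in> S \<Longrightarrow> x \<in> mult_subgroup_gen S"
| mult: "x \<in> mult_subgroup_gen S \<Longrightarrow> y \<in> mult_subgroup_gen S \<Longrightarrow> x * y \<in> mult_subgroup_gen S"
| inv: "x \<in> mult_subgroup_gen S \<Longrightarrow> inverse x \<in> mult_subgroup_gen S"

definition mult_independent :: "complex set \<Rightarrow> bool" where
  "mult_independent A \<longleftrightarrow> finite A \<and>
     (\<forall>k :: complex \<Rightarrow> int. (\<Prod>a\<in>A. a powi k a) = 1 \<longrightarrow> (\<forall>a\<in>A. k a = 0))"

definition infinite_rank :: "complex set \<Rightarrow> bool" where
  "infinite_rank G \<longleftrightarrow> (\<forall>n. \<exists>A. A \<subseteq> G \<and> card A = n \<and> mult_independent A)"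

end

theory Submission
  imports Defs "HOL-Computational_Algebra.Primes"
begin


inductive_set Lf :: "(nat \<Rightarrow> complex) \<Rightarrow> nat \<Rightarrow> complex set" for s :: "nat \<Rightarrow> complex" and n :: nat where
  rat: "x \<in> \<rat> \<Longrightarrow> x \<in> Lf s n"
| gen: "i < n \<Longrightarrow> s i \<in> Lf s n"
| add: "x \<in> Lf s n \<Longrightarrow> y \<in> Lf s n \<Longrightarrow> x + y \<in> Lf s n"
| mul: "x \<in> Lf s n \<Longrightarrow> y \<in> Lf s n \<Longrightarrow> x * y \<in> Lf s n"
| neg: "x \<in> Lf s n \<Longrightarrow> - x \<in> Lf s n"
| inv: "x \<in> Lf s n \<Longrightarrow> inverse x \<in> Lf s n"

lemma Lf_mono: "x \<in> Lf s m \<Longrightarrow> m \<le> n \<Longrightarrow> x \<in> Lf s n"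
  by (induction rule: Lf.induct) (auto intro: Lf.intros)

lemma Lf_diff: "x \<in> Lf s n \<Longrightarrow> y \<in> Lf s n \<Longrightarrow> x - y \<in> Lf s n"
  using Lf.add[OF _ Lf.neg] by (metis diff_conv_add_uminus)

lemma Lf_div: "x \<in> Lf s n \<Longrightarrow> y \<in> Lf s n \<Longrightarrow> x / y \<in> Lf s n"
  using Lf.mul[OF _ Lf.inv] by (metis divide_inverse)

lemma Lf_of_int: "of_int m \<in> Lf s n"
  by (rule Lf.rat) simp

lemma Lf_numeral: "numeral m \<in> Lf s n"
  by (rule Lf.rat) simp

lemmas Lf_cl = Lf_div Lf_diff Lf.mul Lf.add Lf.neg Lf_of_int Lf.inv Lf_numeral

lemma Lf_power: "x \<in> Lf s n \<Longrightarrow> x ^ k \<in> Lf s n"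
  by (induction k) (auto intro: Lf.intros)

lemma Lf_powi: "x \<in> Lf s n \<Longrightarrow> x powi k \<in> Lf s n"
  by (auto simp: power_int_def intro: Lf_power Lf.inv)

lemma Lf_prod: "(\<And>i. i \<in> A \<Longrightarrow> f i \<in> Lf s n) \<Longrightarrow> prod f A \<in> Lf s n"
  by (induction A rule: infinite_finite_induct) (auto intro: Lf.intros)

lemma Lf0: "x \<in> Lf s 0 \<Longrightarrow> x \<in> \<rat>"
  by (induction rule: Lf.induct) auto

definition sq :: "int \<Rightarrow> bool" where "sq b \<longleftrightarrow> (\<exists>m. b = m ^ 2)"

lemma rat_sq:
  assumes "(x::complex) \<in> \<rat>" "x ^ 2 = of_int b" shows "sq b"
proof -
  have "algebraic_int x"
  proof (rule algebraic_int.intros[of "[:-of_int b, 0, 1:]"])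
    show "\<forall>i. coeff [:-of_int b, 0, 1:] i \<in> \<int>"
      by (auto simp: coeff_pCons split: nat.splits)
  qed (use assms in \<open>auto simp: power2_eq_square\<close>)
  then have "x \<in> \<int>" using rational_algebraic_int_is_int assms(1) by blast
  then obtain m where "x = of_int m" by (auto elim: Ints_cases)
  with assms(2) have "b = m ^ 2" by (metis of_int_eq_iff of_int_power)
  then show ?thesis unfolding sq_def by blast
qed

lemma Lf_repr:
  assumes sD: "\<And>i. s i ^ 2 = of_int (D i)"
    and ns: "\<forall>x\<in>Lf s n. x ^ 2 \<noteq> of_int (D n)"
    and x: "x \<in> Lf s (Suc n)"
  shows "\<exists>y z. y \<in> Lf s n \<and> z \<in> Lf s n \<and> x = y + z * s n"
  using x
proof (induction rule: Lf.induct)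
  case (rat x)
  then show ?case by (intro exI[of _ x] exI[of _ 0]) (auto intro: Lf.intros)
next
  case (gen i)
  show ?case
  proof (cases "i < n")
    case True
    then show ?thesis by (intro exI[of _ "s i"] exI[of _ 0]) (auto intro: Lf.intros)
  next
    case False
    with gen have "i = n" by simp
    then show ?thesis by (intro exI[of _ 0] exI[of _ 1]) (auto intro: Lf.intros)
  qed
next
  case (add x y)
  then obtain y1 z1 y2 z2 where "y1 \<in> Lf s n" "z1 \<in> Lf s n" "y2 \<in> Lf s n" "z2 \<in> Lf s n"
     "x = y1 + z1 * s n" "y = y2 + z2 * s n" by blast
  then show ?case by (intro exI[of _ "y1 + y2"] exI[of _ "z1 + z2"]) (auto intro: Lf.intros simp: algebra_simps)
next
  case (mul x y)
  then obtain y1 z1 y2 z2 where h: "y1 \<in> Lf s n" "z1 \<in> Lf s n" "y2 \<in> Lf s n" "z2 \<in> Lf s n"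
     "x = y1 + z1 * s n" "y = y2 + z2 * s n" by blast
  have sn: "s n * s n = of_int (D n)" using sD[of n] by (simp add: power2_eq_square)
  have "x * y = (y1 * y2 + z1 * z2 * of_int (D n)) + (y1 * z2 + z1 * y2) * s n"
    using h(5,6) sn by (simp add: algebra_simps)
  moreover have "y1 * y2 + z1 * z2 * of_int (D n) \<in> Lf s n" "y1 * z2 + z1 * y2 \<in> Lf s n"
    using h by (auto intro!: Lf.add Lf.mul Lf_of_int)
  ultimately show ?case by blast
next
  case (neg x)
  then obtain y z where "y \<in> Lf s n" "z \<in> Lf s n" "x = y + z * s n" by blast
  then show ?case by (intro exI[of _ "-y"] exI[of _ "-z"]) (auto intro: Lf.intros)
next
  case (inv x)
  then obtain y z where h: "y \<in> Lf s n" "z \<in> Lf s n" "x = y + z * s n" by blast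
  show ?case
  proof (cases "x = 0")
    case True
    then show ?thesis by (intro exI[of _ 0] exI[of _ 0]) (auto intro: Lf.intros)
  next
    case False
    define N where "N = y * y - z * z * of_int (D n)"
    have sn: "s n * s n = of_int (D n)" using sD[of n] by (simp add: power2_eq_square)
    have N0: "N \<noteq> 0"
    proof
      assume N: "N = 0"
      show False
      proof (cases "z = 0")
        case True
        with N have "y = 0" by (simp add: N_def)
        with True h False show False by simp
      next
        case False
        have "(y / z) ^ 2 = of_int (D n)" using N False
          by (simp add: N_def power2_eq_square field_simps)
        moreover have "y / z \<in> Lf s n" using h by (intro Lf_div)
        ultimately show False using ns by blast
      qed
    qed
    have "x * (y - z * s n) = N" using h(3) sn by (simp add: N_def algebra_simps)
    then have "inverse x = y / N + (- z / N) * s n"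
      using N0 False by (simp add: field_simps)
    moreover have "y / N \<in> Lf s n" "- z / N \<in> Lf s n"
      using h by (auto simp: N_def intro!: Lf_cl)
    ultimately show ?thesis by blast
  qed
qed

lemma Lf_nosq:
  assumes sD: "\<And>i. s i ^ 2 = of_int (D i)"
    and H: "\<And>n S. S \<subseteq> {..<n} \<Longrightarrow> \<not> sq (D n * prod D S)"
  shows "\<forall>b. (\<forall>S\<subseteq>{..<n}. \<not> sq (b * prod D S)) \<longrightarrow> (\<forall>x\<in>Lf s n. x ^ 2 \<noteq> of_int b)"
proof (induction n)
  case 0
  show ?case
  proof (intro allI impI ballI notI)
    fix b x assume h: "\<forall>S\<subseteq>{..<0::nat}. \<not> sq (b * prod D S)" "x \<in> Lf s 0" "x ^ 2 = of_int b"
    then have "sq b" using rat_sq Lf0 by blast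
    with h(1) show False by (metis empty_subsetI mult.right_neutral prod.empty)
  qed
next
  case (Suc n)
  have nsD: "\<forall>x\<in>Lf s n. x ^ 2 \<noteq> of_int (D n)"
    using Suc.IH H[of _ n] by blast
  show ?case
  proof (intro allI impI ballI notI)
    fix b x assume h: "\<forall>S\<subseteq>{..<Suc n}. \<not> sq (b * prod D S)" "x \<in> Lf s (Suc n)" "x ^ 2 = of_int b"
    have hb: "\<forall>S\<subseteq>{..<n}. \<not> sq (b * prod D S)"
      using h(1) by (metis lessThan_subset_iff le_SucI order_refl subset_trans)
    have hbD: "\<forall>S\<subseteq>{..<n}. \<not> sq ((b * D n) * prod D S)"
    proof (intro allI impI)
      fix S assume S: "S \<subseteq> {..<n}"
      then have "insert n S \<subseteq> {..<Suc n}" "n \<notin> S" by auto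
      then have "\<not> sq (b * prod D (insert n S))" using h(1) by blast
      then show "\<not> sq ((b * D n) * prod D S)" using \<open>n \<notin> S\<close> S
        by (simp add: prod.insert finite_subset[OF S] mult.assoc)
    qed
    obtain y z where yz: "y \<in> Lf s n" "z \<in> Lf s n" "x = y + z * s n"
      using Lf_repr[OF sD nsD h(2)] by blast
    have sn: "s n * s n = of_int (D n)" using sD[of n] by (simp add: power2_eq_square)
    have eq: "y * y + z * z * of_int (D n) + 2 * y * z * s n = of_int b"
      using h(3) yz(3) sn by (simp add: power2_eq_square algebra_simps)
    consider "y = 0" | "z = 0" | "y \<noteq> 0 \<and> z \<noteq> 0" by blast
    then show False
    proof cases
      case 1
      then have "(z * of_int (D n)) ^ 2 = of_int (b * D n)" using eq
        by (simp add: power2_eq_square algebra_simps)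
      moreover have "z * of_int (D n) \<in> Lf s n" using yz by (auto intro: Lf.intros Lf_of_int)
      ultimately show False using Suc.IH hbD by blast
    next
      case 2
      then have "y ^ 2 = of_int b" using eq by (simp add: power2_eq_square)
      then show False using Suc.IH hb yz by blast
    next
      case 3
      then have "s n = (of_int b - y * y - z * z * of_int (D n)) / (2 * y * z)"
        using eq by (simp add: field_simps)
      moreover have "(of_int b - y * y - z * z * of_int (D n)) / (2 * y * z) \<in> Lf s n"
        using yz by (auto intro!: Lf_cl)
      ultimately have "s n \<in> Lf s n" by simp
      then show False using nsD sD by blast
    qed
  qed
qed

lemma pow_repr:
  fixes \<beta> :: complex and p :: int
  assumes b2: "\<beta> ^ 2 = of_int T * \<beta> - of_int R" and pR: "p dvd R" and pT: "\<not> p dvd T"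
    and p: "prime p" and k: "k \<ge> 1"
  shows "\<exists>u v. \<beta> ^ k = of_int u + of_int v * \<beta> \<and> p dvd u \<and> \<not> p dvd v"
  using k
proof (induction k rule: dec_induct)
  case base
  have "\<not> p dvd 1" using p by (meson not_prime_unit)
  then show ?case by (intro exI[of _ 0] exI[of _ 1]) simp
next
  case (step k)
  then obtain u v where h: "\<beta> ^ k = of_int u + of_int v * \<beta>" "p dvd u" "\<not> p dvd v" by blast
  have "\<beta> ^ Suc k = of_int u * \<beta> + of_int v * \<beta> ^ 2"
    using h(1) by (simp add: power2_eq_square algebra_simps)
  also have "\<dots> = of_int (- v * R) + of_int (u + v * T) * \<beta>"
    by (simp add: b2 algebra_simps)
  finally have e: "\<beta> ^ Suc k = of_int (- v * R) + of_int (u + v * T) * \<beta>" .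
  have "\<not> p dvd v * T" using p h(3) pT by (simp add: prime_dvd_mult_iff)
  then have "\<not> p dvd u + v * T" using h(2) by (metis dvd_add_right_iff)
  moreover have "p dvd - v * R" using pR by simp
  ultimately show ?case using e by blast
qed

lemma indep_core:
  fixes \<beta> s :: "nat \<Rightarrow> complex" and p :: int
  assumes sD: "\<And>i. s i ^ 2 = of_int (D i)"
    and H: "\<And>n S. S \<subseteq> {..<n} \<Longrightarrow> \<not> sq (D n * prod D S)"
    and bdef: "\<And>i. \<beta> i = (of_int (T i) + s i) / 2"
    and b2: "\<And>i. \<beta> i ^ 2 = of_int (T i) * \<beta> i - of_int (R i)"
    and pR: "\<And>i. p dvd R i" and pT: "\<And>i. \<not> p dvd T i" and p: "prime p"
    and nz: "\<And>i. \<beta> i \<noteq> 0"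
  shows "(\<Prod>i<n. \<beta> i powi c i) = 1 \<Longrightarrow> \<forall>i<n. c i = 0"
proof (induction n)
  case 0
  then show ?case by simp
next
  case (Suc n)
  have bL: "\<beta> i \<in> Lf s n" if "i < n" for i
    unfolding bdef by (rule Lf_div[OF Lf.add[OF Lf_of_int Lf.gen[OF that]] Lf_numeral])
  have cn: "c n = 0"
  proof (rule ccontr)
    assume cn: "c n \<noteq> 0"
    have P0: "(\<Prod>i<n. \<beta> i powi c i) \<noteq> 0" using nz by (simp add: prod_zero_iff)
    have "(\<Prod>i<n. \<beta> i powi c i) * \<beta> n powi c n = 1" using Suc.prems by simp
    then have "\<beta> n powi c n = inverse (\<Prod>i<n. \<beta> i powi c i)"
      using P0 by (simp add: field_simps)
    also have "\<dots> \<in> Lf s n" using bL by (intro Lf.inv Lf_prod Lf_powi) auto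
    finally have bc: "\<beta> n powi c n \<in> Lf s n" .
    define k where "k = nat \<bar>c n\<bar>"
    have k1: "k \<ge> 1" using cn by (simp add: k_def)
    have bk: "\<beta> n ^ k \<in> Lf s n"
    proof (cases "c n > 0")
      case True
      then have "\<beta> n powi c n = \<beta> n ^ k" by (simp add: k_def power_int_def)
      then show ?thesis using bc by simp
    next
      case False
      then have "\<beta> n powi c n = inverse (\<beta> n ^ k)" by (simp add: k_def power_int_def power_inverse)
      then have "\<beta> n ^ k = inverse (\<beta> n powi c n)" by simp
      then show ?thesis using bc Lf.inv by metis
    qed
    obtain u v where uv: "\<beta> n ^ k = of_int u + of_int v * \<beta> n" "\<not> p dvd v"
      using pow_repr[OF b2 pR pT p k1] by blast
    have v0: "v \<noteq> 0" using uv(2) by auto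
    have "\<beta> n = (\<beta> n ^ k - of_int u) / of_int v" using uv(1) v0 by simp
    also have "\<dots> \<in> Lf s n" by (rule Lf_div[OF Lf_diff[OF bk Lf_of_int] Lf_of_int])
    finally have "\<beta> n \<in> Lf s n" .
    then have "2 * \<beta> n - of_int (T n) \<in> Lf s n" by (rule Lf_diff[OF Lf.mul[OF Lf_numeral] Lf_of_int])
    moreover have "2 * \<beta> n - of_int (T n) = s n" by (simp add: bdef field_simps)
    ultimately have "s n \<in> Lf s n" by simp
    moreover have "\<forall>S\<subseteq>{..<n}. \<not> sq (D n * prod D S)" using H by blast
    ultimately show False using Lf_nosq[OF sD H, of n] sD by blast
  qed
  then have "(\<Prod>i<n. \<beta> i powi c i) = 1" using Suc.prems by simp
  then have "\<forall>i<n. c i = 0" by (rule Suc.IH)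
  then show ?case using cn less_Suc_eq by auto
qed



definition nxt :: "nat \<Rightarrow> nat" where "nxt N = (SOME l. prime l \<and> N < l)"

lemma nxt: "prime (nxt N) \<and> N < nxt N"
  unfolding nxt_def by (rule someI_ex) (rule bigger_prime)

definition Dq :: "nat \<Rightarrow> nat \<Rightarrow> int" where
  "Dq q l = - (int l * (4 * int q ^ l - int l))"

primrec ls :: "nat \<Rightarrow> nat \<Rightarrow> nat \<Rightarrow> nat" where
  "ls p q 0 = nxt (p + 2)"
| "ls p q (Suc n) = nxt (nat \<bar>Dq q (ls p q n)\<bar> + p + 2)"

lemma ls_prime: "prime (ls p q i)"
  by (cases i) (simp_all add: nxt)

lemma ls_gt: "p + 2 < ls p q i"
proof (cases i)
  case 0 then show ?thesis using nxt[of "p+2"] by simp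
next
  case (Suc j) then show ?thesis using nxt[of "nat \<bar>Dq q (ls p q j)\<bar> + p + 2"] by simp
qed

lemma ls_gt_D: "\<bar>Dq q (ls p q i)\<bar> < int (ls p q (Suc i))"
proof -
  define x where "x = Dq q (ls p q i)"
  have h: "nat \<bar>x\<bar> + p + 2 < nxt (nat \<bar>x\<bar> + p + 2)" using nxt by blast
  then have "int (nat \<bar>x\<bar>) < int (nxt (nat \<bar>x\<bar> + p + 2))" by linarith
  then show ?thesis by (simp add: x_def del: of_nat_less_iff)
qed

lemma q_pow_gt: assumes "q \<ge> 2" shows "int l < int q ^ l"
proof -
  have "l < 2 ^ l" by (rule less_exp)
  also have "(2::nat) ^ l \<le> q ^ l" using assms by (simp add: power_mono)
  finally show ?thesis by (metis of_nat_less_iff of_nat_power)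
qed

lemma D_bounds: assumes "q \<ge> 2" "l \<ge> 1"
  shows "Dq q l < 0" "int l \<le> \<bar>Dq q l\<bar>" "\<bar>Dq q l\<bar> = int l * (4 * int q ^ l - int l)"
proof -
  have a: "int l < int q ^ l" using q_pow_gt[OF assms(1)] .
  then have b: "4 * int q ^ l - int l \<ge> 1" by linarith
  have c: "int l * (4 * int q ^ l - int l) \<ge> int l" using b assms(2)
    by (metis mult.right_neutral mult_left_mono of_nat_0_le_iff)
  show "Dq q l < 0" using c assms(2) by (simp add: Dq_def)
  show "\<bar>Dq q l\<bar> = int l * (4 * int q ^ l - int l)" using c assms(2) by (simp add: Dq_def)
  then show "int l \<le> \<bar>Dq q l\<bar>" using c by simp
qed

lemma ls_ge1: "ls p q i \<ge> 1" using ls_gt[of p q i] by simp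

lemma D_lt_ls: assumes "q \<ge> 2" "j < i" shows "\<bar>Dq q (ls p q j)\<bar> < int (ls p q i)"
  using assms(2)
proof (induction i)
  case 0 then show ?case by simp
next
  case (Suc i)
  show ?case
  proof (cases "j = i")
    case True then show ?thesis using ls_gt_D by simp
  next
    case False
    then have "j < i" using Suc.prems by simp
    then have "\<bar>Dq q (ls p q j)\<bar> < int (ls p q i)" by (rule Suc.IH)
    also have "\<dots> \<le> \<bar>Dq q (ls p q i)\<bar>" using D_bounds(2)[OF assms(1) ls_ge1] .
    also have "\<dots> < int (ls p q (Suc i))" by (rule ls_gt_D)
    finally show ?thesis .
  qed
qed

lemma D_smono: assumes "q \<ge> 2" "j < i" shows "\<bar>Dq q (ls p q j)\<bar> < \<bar>Dq q (ls p q i)\<bar>"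
  using D_lt_ls[OF assms, of p] D_bounds(2)[OF assms(1) ls_ge1[of p q i]] by linarith

lemma D_facts:
  assumes p: "prime p" and q: "q = p ^ k" "k \<ge> 1"
  shows "int (ls p q i) dvd Dq q (ls p q i)" "\<not> (int (ls p q i))^2 dvd Dq q (ls p q i)"
proof -
  define l where "l = ls p q i"
  show "int (ls p q i) dvd Dq q (ls p q i)" by (simp add: Dq_def)
  show "\<not> (int (ls p q i))^2 dvd Dq q (ls p q i)"
  proof
    assume h: "(int (ls p q i))^2 dvd Dq q (ls p q i)"
    have l0: "int l \<noteq> 0" using ls_ge1[of p q i] by (simp add: l_def)
    from h have "int l * int l dvd int l * (4 * int q ^ l - int l)"
      by (simp add: Dq_def l_def power2_eq_square)
    then have "int l dvd 4 * int q ^ l - int l" using l0 by simp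
    then have "int l dvd (4 * int q ^ l - int l) + int l" by (rule dvd_add) simp
    then have "int l dvd int (4 * q ^ l)" by simp
    then have d4: "l dvd 4 * q ^ l" by (simp only: int_dvd_int_iff)
    have pl: "prime l" using ls_prime by (simp add: l_def)
    have gl: "p + 2 < l" using ls_gt by (simp add: l_def)
    have p2: "2 \<le> p" using p by (simp add: prime_ge_2_nat)
    have "l dvd 4 \<or> l dvd q ^ l" using d4 pl prime_dvd_mult_iff by blast
    moreover have "\<not> l dvd 4"
    proof
      assume "l dvd 4" then have "l \<le> 4" by (rule dvd_imp_le) simp
      then show False using gl p2 by simp
    qed
    ultimately have "l dvd q ^ l" by blast
    then have "l dvd p ^ (k * l)" using q by (simp add: power_mult)
    then have "l dvd p" using pl prime_dvd_power by blast
    then have "l \<le> p" using p by (intro dvd_imp_le) (auto simp: prime_gt_0_nat)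
    with gl show False by simp
  qed
qed

lemma D_H:
  assumes p: "prime p" and q: "q = p ^ k" "k \<ge> 1" and S: "S \<subseteq> {..<n}"
  shows "\<not> sq (Dq q (ls p q n) * prod (\<lambda>j. Dq q (ls p q j)) S)"
proof
  define D where "D = (\<lambda>j. Dq q (ls p q j))"
  define l where "l = int (ls p q n)"
  assume "sq (Dq q (ls p q n) * prod (\<lambda>j. Dq q (ls p q j)) S)"
  then obtain m where m: "D n * prod D S = m ^ 2" by (auto simp: sq_def D_def)
  have q2: "q \<ge> 2"
  proof -
    have "p ^ 1 \<le> p ^ k" using q(2) prime_ge_2_nat[OF p] by (intro power_increasing) auto
    then show ?thesis using q(1) prime_ge_2_nat[OF p] by simp
  qed
  have pl: "prime l" using ls_prime by (simp add: l_def)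
  have fS: "finite S" using S finite_subset by blast
  have nd: "\<not> l dvd D j" if "j \<in> S" for j
  proof
    assume "l dvd D j"
    moreover have "D j \<noteq> 0" using D_bounds(1)[OF q2 ls_ge1[of p q j]] by (simp add: D_def)
    ultimately have "\<bar>l\<bar> \<le> \<bar>D j\<bar>" by (simp add: dvd_imp_le_int)
    moreover have "\<bar>D j\<bar> < l" using D_lt_ls[OF q2, of j n] that S by (auto simp: D_def l_def)
    ultimately show False by simp
  qed
  have "\<not> l dvd prod D S" using nd pl fS by (simp add: prime_dvd_prod_iff)
  then have cop: "coprime (l ^ 2) (prod D S)" using pl by (simp add: prime_imp_coprime)
  have "l dvd D n" using D_facts[OF p q] by (simp add: l_def D_def)
  then have "l dvd m ^ 2" using m by (metis dvd_mult2)
  then have "l dvd m" using pl prime_dvd_power by blast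
  then have "l ^ 2 dvd m ^ 2" by simp
  then have "l ^ 2 dvd D n" using m cop by (metis coprime_dvd_mult_left_iff)
  then show False using D_facts[OF p q] by (simp add: l_def D_def)
qed



lemma emb_0: "qbar_embedding \<sigma> \<Longrightarrow> \<sigma> 0 = 0"
proof -
  assume e: "qbar_embedding \<sigma>"
  have "(0::complex) \<in> Qbar" by (simp add: Qbar_def)
  then have "\<sigma> (0 + 0) = \<sigma> 0 + \<sigma> 0" using e unfolding qbar_embedding_def by blast
  then show ?thesis by simp
qed

lemma emb_nat: assumes e: "qbar_embedding \<sigma>" shows "\<sigma> (of_nat n) = of_nat n"
proof (induction n)
  case 0 then show ?case using emb_0[OF e] by simp
next
  case (Suc n)
  have a: "of_nat n \<in> Qbar" "(1::complex) \<in> Qbar" by (auto simp: Qbar_def intro!: rat_imp_algebraic)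
  have "\<sigma> (of_nat (Suc n)) = \<sigma> (of_nat n + 1)" by (simp only: of_nat_Suc add.commute)
  also have "\<dots> = \<sigma> (of_nat n) + \<sigma> 1" using e a unfolding qbar_embedding_def by blast
  also have "\<dots> = of_nat (Suc n)" using Suc e by (simp add: qbar_embedding_def)
  finally show ?case .
qed

lemma emb_pow: assumes e: "qbar_embedding \<sigma>" and a: "\<And>j. algebraic (x ^ j)"
  shows "\<sigma> (x ^ n) = \<sigma> x ^ n"
proof (induction n)
  case 0 then show ?case using e by (simp add: qbar_embedding_def)
next
  case (Suc n)
  have "\<sigma> (x ^ Suc n) = \<sigma> (x * x ^ n)" by simp
  also have "\<dots> = \<sigma> x * \<sigma> (x ^ n)"
    using e a[of 1] a[of n] unfolding qbar_embedding_def Qbar_def by auto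
  finally show ?case using Suc by simp
qed

lemma quad_mod:
  fixes y :: complex and R T :: real
  assumes eq: "y ^ 2 + of_real R = of_real T * y" and lt: "T ^ 2 < 4 * R"
  shows "cmod y ^ 2 = R"
proof -
  define a where "a = Re y"
  define b where "b = Im y"
  have re: "a * a - b * b + R = T * a" using arg_cong[OF eq, of Re]
    by (simp add: a_def b_def power2_eq_square)
  have im: "2 * a * b = T * b" using arg_cong[OF eq, of Im]
    by (simp add: a_def b_def power2_eq_square)
  have b0: "b \<noteq> 0"
  proof
    assume "b = 0"
    with re have "(a - T / 2) ^ 2 + (R - T ^ 2 / 4) = 0" by (simp add: power2_eq_square algebra_simps)
    moreover have "(a - T / 2) ^ 2 \<ge> 0" by simp
    ultimately show False using lt by linarith
  qed
  with im have aT: "a = T / 2" by simp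
  have "a * a = T * T / 4" "T * a = T * T / 2" by (simp_all add: aT field_simps)
  with re have "a * a + b * b = R" by linarith
  then show ?thesis unfolding cmod_power2 a_def b_def by (simp add: power2_eq_square)
qed

lemma weil_gen:
  fixes \<alpha> :: complex and N T q :: nat
  assumes N: "N > 0" and eq: "\<alpha> ^ (2 * N) + of_nat (q ^ N) = of_nat T * \<alpha> ^ N"
    and lt: "real T ^ 2 < 4 * real q ^ N" and alg: "\<And>j. algebraic (\<alpha> ^ j)"
  shows "weil_number q \<alpha>"
  unfolding weil_number_def
proof (intro conjI allI impI)
  show "\<alpha> \<in> Qbar" using alg[of 1] by (simp add: Qbar_def)
  define P :: "complex poly" where "P = ([:of_nat (q ^ N):] - monom (of_nat T) N) + monom 1 (2 * N)"
  have dg: "degree ([:of_nat (q ^ N):] - monom (of_nat T) N :: complex poly) < degree (monom (1::complex) (2 * N))"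
  proof -
    have "degree ([:of_nat (q ^ N):] - monom (of_nat T) N :: complex poly) \<le> max (degree [:of_nat (q ^ N)::complex:]) (degree (monom (of_nat T :: complex) N))"
      by (rule degree_diff_le_max)
    also have "\<dots> \<le> N" by (simp add: degree_monom_le)
    also have "\<dots> < degree (monom (1::complex) (2 * N))" using N by (simp add: degree_monom_eq)
    finally show ?thesis .
  qed
  show "algebraic_integer \<alpha>"
    unfolding algebraic_integer_def
  proof (intro exI[of _ P] conjI allI)
    fix i show "coeff P i \<in> \<int>" by (auto simp: P_def coeff_monom coeff_pCons split: nat.split)
  next
    show "lead_coeff P = 1" unfolding P_def using dg lead_coeff_add_le by (metis lead_coeff_monom)
  next
    have "poly P \<alpha> = (\<alpha> ^ (2 * N) + of_nat (q ^ N)) - of_nat T * \<alpha> ^ N" by (simp add: P_def poly_monom)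
    then show "poly P \<alpha> = 0" using eq by simp
  qed
  fix \<sigma> assume e: "qbar_embedding \<sigma>"
  define y where "y = \<sigma> \<alpha> ^ N"
  have qa: "of_nat (q ^ N) \<in> Qbar" "of_nat T \<in> Qbar" by (auto simp: Qbar_def intro!: rat_imp_algebraic)
  have a2: "\<alpha> ^ (2 * N) \<in> Qbar" "\<alpha> ^ N \<in> Qbar" using alg by (auto simp: Qbar_def)
  have "\<sigma> (\<alpha> ^ (2 * N) + of_nat (q ^ N)) = \<sigma> (of_nat T * \<alpha> ^ N)" using eq by simp
  then have "\<sigma> (\<alpha> ^ (2 * N)) + \<sigma> (of_nat (q ^ N)) = \<sigma> (of_nat T) * \<sigma> (\<alpha> ^ N)"
    using e qa a2 unfolding qbar_embedding_def by metis
  moreover have "\<sigma> (\<alpha> ^ (2 * N)) = \<sigma> \<alpha> ^ (N * 2)" using emb_pow[OF e alg] by (simp add: mult.commute)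
  moreover have "\<sigma> \<alpha> ^ (N * 2) = y ^ 2" by (simp add: y_def power_mult)
  moreover have "\<sigma> (of_nat (q ^ N)) = of_nat (q ^ N)" by (rule emb_nat[OF e])
  moreover have "\<sigma> (of_nat T) = of_nat T" by (rule emb_nat[OF e])
  moreover have "\<sigma> (\<alpha> ^ N) = y" using emb_pow[OF e alg] by (simp add: y_def)
  ultimately have "y ^ 2 + of_nat (q ^ N) = of_nat T * y" by simp
  then have "y ^ 2 + of_real (real q ^ N) = of_real (real T) * y" by simp
  then have "cmod y ^ 2 = real q ^ N" using quad_mod lt by blast
  have "cmod (\<sigma> \<alpha>) ^ (2 * N) = (cmod (\<sigma> \<alpha>) ^ N) ^ 2"
    by (simp add: power_mult[symmetric] mult.commute)
  also have "\<dots> = cmod y ^ 2" by (simp add: y_def norm_power)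
  also have "\<dots> = real q ^ N" by fact
  also have "\<dots> = sqrt (real q) ^ (2 * N)" by (simp add: power_mult)
  finally have "cmod (\<sigma> \<alpha>) ^ (2 * N) = sqrt (real q) ^ (2 * N)" .
  then show "cmod (\<sigma> \<alpha>) = sqrt (real q)"
    by (rule power_eq_imp_eq_base) (use N in auto)
qed



lemma quad_alg:
  fixes a b s :: complex
  assumes "a \<in> \<rat>" "b \<in> \<rat>" "s ^ 2 \<in> \<rat>"
  shows "algebraic (a + b * s)"
proof (rule algebraicI'[of "[:a * a - b * b * s ^ 2, - 2 * a, 1:]"])
  show "coeff [:a * a - b * b * s ^ 2, - 2 * a, 1:] i \<in> \<rat>" for i
    using assms by (auto simp: coeff_pCons split: nat.split)
  show "[:a * a - b * b * s ^ 2, - 2 * a, 1:] \<noteq> 0" by simp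
  show "poly [:a * a - b * b * s ^ 2, - 2 * a, 1:] (a + b * s) = 0"
    by (simp add: algebra_simps power2_eq_square)
qed

lemma pow_form:
  fixes T s :: complex
  assumes "T \<in> \<rat>" "s ^ 2 \<in> \<rat>"
  shows "\<exists>a b. a \<in> \<rat> \<and> b \<in> \<rat> \<and> ((T + s) / 2) ^ j = a + b * s"
proof (induction j)
  case 0 then show ?case by (intro exI[of _ 1] exI[of _ 0]) simp
next
  case (Suc j)
  then obtain a b where h: "a \<in> \<rat>" "b \<in> \<rat>" "((T + s) / 2) ^ j = a + b * s" by blast
  have "((T + s) / 2) ^ Suc j = ((T + s) / 2) * (a + b * s)" by (simp only: power_Suc h(3))
  also have "\<dots> = (a * T + b * s ^ 2) / 2 + ((a + b * T) / 2) * s"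
    by (simp add: field_simps power2_eq_square)
  finally have eq: "((T + s) / 2) ^ Suc j = (a * T + b * s ^ 2) / 2 + ((a + b * T) / 2) * s" .
  have "(a * T + b * s ^ 2) / 2 \<in> \<rat>" "(a + b * T) / 2 \<in> \<rat>" using h(1,2) assms by auto
  with eq show ?case by blast
qed

lemma G_pow: "x \<in> mult_subgroup_gen S \<Longrightarrow> x ^ m \<in> mult_subgroup_gen S"
  by (induction m) (auto intro: mult_subgroup_gen.intros)

definition TI :: "nat \<Rightarrow> nat \<Rightarrow> nat \<Rightarrow> int" where
  "TI p q i = 2 * int q ^ ls p q i - int (ls p q i)"
definition RI :: "nat \<Rightarrow> nat \<Rightarrow> nat \<Rightarrow> int" where
  "RI p q i = int q ^ (2 * ls p q i)"
definition sI :: "nat \<Rightarrow> nat \<Rightarrow> nat \<Rightarrow> complex" where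
  "sI p q i = \<i> * of_real (sqrt (of_int (- Dq q (ls p q i))))"
definition bI :: "nat \<Rightarrow> nat \<Rightarrow> nat \<Rightarrow> complex" where
  "bI p q i = (of_int (TI p q i) + sI p q i) / 2"
definition aI :: "nat \<Rightarrow> nat \<Rightarrow> nat \<Rightarrow> complex" where
  "aI p q i = rcis (root (2 * ls p q i) (cmod (bI p q i))) (Arg (bI p q i) / real (2 * ls p q i))"

locale wq =
  fixes p k q :: nat
  assumes p: "prime p" and k: "k \<ge> 1" and q: "q = p ^ k"
begin

lemma q2: "q \<ge> 2"
proof -
  have "p ^ 1 \<le> p ^ k" using k prime_ge_2_nat[OF p] by (intro power_increasing) auto
  then show ?thesis using q prime_ge_2_nat[OF p] by simp
qed

lemma Dneg: "Dq q (ls p q i) < 0" using D_bounds(1)[OF q2 ls_ge1] .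

lemma sD: "sI p q i ^ 2 = of_int (Dq q (ls p q i))"
proof -
  have "of_real (sqrt (of_int (- Dq q (ls p q i)))) ^ 2 = (of_int (- Dq q (ls p q i)) :: complex)"
    using Dneg[of i] by (simp flip: of_real_power)
  then show ?thesis by (simp add: sI_def power_mult_distrib)
qed

lemma TD: "Dq q (ls p q i) = TI p q i ^ 2 - 4 * RI p q i"
  by (simp add: Dq_def TI_def RI_def power_mult[of "int q" 2, simplified] power2_eq_square algebra_simps
      flip: power_mult)

lemma T_bounds: "0 < TI p q i" "TI p q i < 2 * int q ^ ls p q i"
proof -
  have a: "int (ls p q i) < int q ^ ls p q i" by (rule q_pow_gt[OF q2])
  have b: "int (ls p q i) \<ge> 1" using ls_ge1[of p q i] by simp
  show "0 < TI p q i" "TI p q i < 2 * int q ^ ls p q i" unfolding TI_def using a b by linarith+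
qed

lemma b2: "bI p q i ^ 2 = of_int (TI p q i) * bI p q i - of_int (RI p q i)"
proof -
  have s: "sI p q i * sI p q i = of_int (TI p q i) * of_int (TI p q i) - 4 * of_int (RI p q i)"
    using sD[of i] TD[of i] by (simp add: power2_eq_square)
  show ?thesis unfolding bI_def
    by (simp add: power2_eq_square field_simps s)
qed

lemma pR: "int p dvd RI p q i"
proof -
  have h1: "int p dvd int q" using q k by (simp add: dvd_power)
  have h2: "int q dvd int q ^ (2 * ls p q i)" using ls_ge1[of p q i] by (simp add: dvd_power)
  show ?thesis unfolding RI_def by (rule dvd_trans[OF h1 h2])
qed

lemma pT: "\<not> int p dvd TI p q i"
proof
  assume h: "int p dvd TI p q i"
  have "int p dvd 2 * int q ^ ls p q i"
  proof -
    have "int p dvd int q" using q k by (simp add: dvd_power)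
    then have "int p dvd int q ^ ls p q i" using ls_ge1[of p q i] by (meson dvd_power dvd_trans le_numeral_extra(2) less_le_trans zero_less_one)
    then show ?thesis by simp
  qed
  with h have "int p dvd int (ls p q i)" unfolding TI_def by (metis dvd_diff_right_iff)
  then have "p dvd ls p q i" by simp
  then have "p = ls p q i" using p ls_prime by (simp add: primes_dvd_imp_eq)
  then show False using ls_gt[of p q i] by simp
qed

lemma Im_b: "Im (bI p q i) = sqrt (of_int \<bar>Dq q (ls p q i)\<bar>) / 2"
  using Dneg[of i] by (simp add: bI_def sI_def)

lemma b_nz: "bI p q i \<noteq> 0"
proof -
  have "Im (bI p q i) > 0" using Dneg[of i] by (simp add: Im_b)
  then show ?thesis by auto
qed

lemma b_inj: "inj bI'" if "bI' = bI p q" for bI'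
proof -
  have "strict_mono (\<lambda>i. Im (bI p q i))"
  proof (rule strict_monoI)
    fix x y :: nat assume "x < y"
    then have "real_of_int \<bar>Dq q (ls p q x)\<bar> < real_of_int \<bar>Dq q (ls p q y)\<bar>"
      by (simp only: of_int_less_iff) (rule D_smono[OF q2])
    then show "Im (bI p q x) < Im (bI p q y)" unfolding Im_b by simp
  qed
  then have "inj (\<lambda>i. Im (bI p q i))" by (rule strict_mono_imp_inj_on)
  then show ?thesis unfolding that by (auto simp: inj_def)
qed

lemma b_indep: "(\<Prod>i<n. bI p q i powi c i) = 1 \<Longrightarrow> \<forall>i<n. c i = 0"
proof -
  have bdef: "\<And>i. bI p q i = (of_int (TI p q i) + sI p q i) / 2" by (simp add: bI_def)
  have pp: "prime (int p)" using p by simp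
  show "(\<Prod>i<n. bI p q i powi c i) = 1 \<Longrightarrow> \<forall>i<n. c i = 0"
    by (rule indep_core[OF sD D_H[OF p q k] bdef b2 pR pT pp b_nz])
qed

lemma a_pow: "aI p q i ^ (2 * ls p q i) = bI p q i"
proof -
  have N: "0 < 2 * ls p q i" using ls_ge1[of p q i] by simp
  show ?thesis unfolding aI_def DeMoivre2 using N by (simp add: rcis_cmod_Arg)
qed

lemma a_alg: "algebraic (aI p q i ^ j)"
proof -
  define N where "N = 2 * ls p q i"
  have N: "N > 0" using ls_ge1[of p q i] by (simp add: N_def)
  have "(aI p q i ^ j) ^ N = (aI p q i ^ N) ^ j" by (simp only: power_mult[symmetric] mult.commute)
  then have "(aI p q i ^ j) ^ N = bI p q i ^ j" using a_pow by (simp add: N_def)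
  moreover obtain a b where ab: "a \<in> \<rat>" "b \<in> \<rat>" "bI p q i ^ j = a + b * sI p q i"
    using pow_form[of "of_int (TI p q i)" "sI p q i" j] sD by (auto simp: bI_def)
  moreover have "algebraic (a + b * sI p q i)" using ab sD by (intro quad_alg) auto
  ultimately have alg: "algebraic ((aI p q i ^ j) ^ N)" by simp
  show ?thesis
    by (rule algebraic_root[OF alg, of "monom 1 N"]) (use N in \<open>auto simp: poly_monom coeff_monom degree_monom_eq\<close>)
qed

lemma a_weil: "weil_number q (aI p q i)"
proof -
  define l where "l = ls p q i"
  define N where "N = 2 * l"
  define T where "T = nat (TI p q i)"
  have N: "N > 0" using ls_ge1[of p q i] by (simp add: N_def l_def)
  have T: "int T = TI p q i" using T_bounds[of i] by (simp add: T_def)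
  have aN: "aI p q i ^ N = bI p q i" by (simp add: N_def l_def a_pow)
  have "aI p q i ^ (2 * N) = (aI p q i ^ N) ^ 2" by (simp only: power_mult[symmetric] mult.commute)
  then have "aI p q i ^ (2 * N) = bI p q i ^ 2" using aN by simp
  moreover note aN
  moreover have "of_nat (q ^ N) = (of_int (RI p q i) :: complex)" by (simp add: RI_def N_def l_def)
  moreover have "of_nat T = (of_int (TI p q i) :: complex)"
  proof -
    have "(of_nat T :: complex) = of_int (int T)" by simp
    then show ?thesis by (simp only: T)
  qed
  ultimately have eq: "aI p q i ^ (2 * N) + of_nat (q ^ N) = of_nat T * aI p q i ^ N"
    using b2[of i] by simp
  have "real T ^ 2 < (2 * real q ^ l) ^ 2"
  proof -
    have "int T < 2 * int q ^ l" using T T_bounds[of i] by (simp add: l_def)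
    then have "real_of_int (int T) < real_of_int (2 * int q ^ l)" by (simp only: of_int_less_iff)
    then have "real T < 2 * real q ^ l" by simp
    then show ?thesis by (intro power_strict_mono) auto
  qed
  also have "\<dots> = 4 * (real q ^ l) ^ 2" by (simp add: power_mult_distrib)
  also have "(real q ^ l) ^ 2 = real q ^ N" unfolding N_def by (simp only: power_mult[symmetric] mult.commute)
  finally have lt: "real T ^ 2 < 4 * real q ^ N" .
  show ?thesis by (rule weil_gen[OF N eq lt a_alg])
qed

end



theorem corollary3p9:
  fixes q :: nat
  assumes "\<exists>p k. prime p \<and> k \<ge> 1 \<and> q = p ^ k"
  shows "infinite_rank (mult_subgroup_gen {\<alpha>. weil_number q \<alpha>})"
proof -
  obtain p k where pk: "prime p" "k \<ge> 1" "q = p ^ k" using assms by blast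
  interpret wq p k q using pk by unfold_locales
  show ?thesis unfolding infinite_rank_def
  proof
    fix n
    define A where "A = bI p q ` {..<n}"
    have inj: "inj_on (bI p q) {..<n}" using b_inj[OF refl] by (rule inj_on_subset) simp
    have sub: "A \<subseteq> mult_subgroup_gen {\<alpha>. weil_number q \<alpha>}"
    proof
      fix x assume "x \<in> A"
      then obtain i where x: "x = bI p q i" by (auto simp: A_def)
      have "aI p q i \<in> mult_subgroup_gen {\<alpha>. weil_number q \<alpha>}"
        using a_weil[of i] by (intro mult_subgroup_gen.gen) simp
      then have "aI p q i ^ (2 * ls p q i) \<in> mult_subgroup_gen {\<alpha>. weil_number q \<alpha>}" by (rule G_pow)
      then show "x \<in> mult_subgroup_gen {\<alpha>. weil_number q \<alpha>}" by (simp add: x a_pow)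
    qed
    have card: "card A = n" using card_image[OF inj] by (simp add: A_def)
    have ind: "mult_independent A"
      unfolding mult_independent_def
    proof (intro conjI allI impI ballI)
      show "finite A" by (simp add: A_def)
    next
      fix kk :: "complex \<Rightarrow> int" and a assume h: "(\<Prod>a\<in>A. a powi kk a) = 1" "a \<in> A"
      have "(\<Prod>a\<in>A. a powi kk a) = (\<Prod>i<n. bI p q i powi kk (bI p q i))"
        unfolding A_def by (subst prod.reindex[OF inj]) simp
      with h(1) have "(\<Prod>i<n. bI p q i powi kk (bI p q i)) = 1" by simp
      then have "\<forall>i<n. kk (bI p q i) = 0" by (rule b_indep[where c = "\<lambda>i. kk (bI p q i)"])
      then show "kk a = 0" using h(2) by (auto simp: A_def)
    qed
    show "\<exists>A. A \<subseteq> mult_subgroup_gen {\<alpha>. weil_number q \<alpha>} \<and> card A = n \<and> mult_independent A"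
      using sub card ind by blast
  qed
qed

end
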